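(* Let $m\ge 1$, let $t_0$ be a vertex of $P(G,g_0)$, and let $t_1,\dots,t_m$ and $\mu$-operations $\nu_1,\dots,\nu_m$ be such that for each $i=1,\dots,m$ the operation $\nu_i$ is applicable to $t_{i-1}$ and $t_i=\nu_i(t_{i-1})$, and for each $i=1,\dots,m-1$ the leading element of $\nu_{i+1}$ equals the new element of $\nu_i$. Then $t_0,t_1,\dots,t_m$ are pairwise distinct vertices of $P(G,g_0)$ and any two of them are adjacent, i.e. they induce a complete subgraph of the graph of $P(G,g_0)$.
   Context: Let $G$ be a finite abelian group of order $D$ with zero element $0$, and let $G^+=G\setminus\{0\}$. For $g_0\in G$, let $T(G,g_0)$ be the set of vectors $t=(t(g))_{g\in G^+}\in\mathbb{Z}_{\ge 0}^{G^+}$ with $\sum_{g\in G^+}t(g)g=g_0$ (sum computed in $G$), where the zero vector is excluded when $g_0=0$. The master corner polyhedron is $P(G,g_0)=\mathrm{conv}\,T(G,g_0)\subset\mathbb{R}^{G^+}$. For $t\in T(G,g_0)$ put $G_t=\{g\in G^+ : t(g)>0\}$. The graph of $P(G,g_0)$ has the vertices of $P(G,g_0)$ as nodes, two vertices being adjacent if the segment joining them is an edge (one-dimensional face) of $P(G,g_0)$. $\mu$-operations: For $t\in T(G,g_0)$ and distinct $h,f\in G_t$ with $t(h)\le t(f)$ and $h+f\neq 0$, the operation $\mu_{h,f}$ is said to be applicable to $t$, and $s=\mu_{h,f}(t)$ is defined by $s(h)=0$, $s(f)=t(f)-t(h)$, $s(h+f)=t(h+f)+t(h)$, and $s(g)=t(g)$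 for all other $g\in G^+$. For $t\in T(G,g_0)$ and $h\in G_t$ with $t(h)>1$ and $t(h)h\neq 0$, the operation $\mu_h$ is applicable to $t$, and $s=\mu_h(t)$ is defined by $s(h)=0$, $s(t(h)h)=t(t(h)h)+1$, and $s(g)=t(g)$ for all other $g\in G^+$. The leading element of $\mu_{h,f}$ and of $\mu_h$ is $h$; the new element of $\mu_{h,f}$ applied to $t$ is $h+f$, and the new element of $\mu_h$ applied to $t$ is $t(h)h$. *)

theory Defs
  imports "HOL-Analysis.Analysis"
begin

text \<open>Points of R^(G+) are embedded into real ^ 'a (coordinates indexed by all of G),
  with the coordinate at 0 identically zero.\<close>

primrec nsm :: "nat \<Rightarrow> 'a::ab_group_add \<Rightarrow> 'a" where
  "nsm 0 g = 0"
| "nsm (Suc n) g = g + nsm n g"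

definition Tset :: "'a::{ab_group_add,finite} \<Rightarrow> ('a \<Rightarrow> nat) set" where
  "Tset g0 = {t. t 0 = 0 \<and> (\<Sum>g\<in>UNIV - {0}. nsm (t g) g) = g0
               \<and> (g0 = 0 \<longrightarrow> (\<exists>g. t g \<noteq> 0))}"

definition vecT :: "('a::finite \<Rightarrow> nat) \<Rightarrow> real ^ ('a::finite)" where
  "vecT t = (\<chi> g. real (t g))"

definition corner :: "'a::{ab_group_add,finite} \<Rightarrow> (real ^ ('a::{ab_group_add,finite})) set" where
  "corner g0 = convex hull (vecT ` Tset g0)"

definition is_vertex :: "'a::{ab_group_add,finite} \<Rightarrow> real ^ ('a::{ab_group_add,finite}) \<Rightarrow> bool" where
  "is_vertex g0 x \<longleftrightarrow> x extreme_point_of corner g0"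

definition adjacent :: "'a::{ab_group_add,finite} \<Rightarrow> real ^ ('a::{ab_group_add,finite}) \<Rightarrow> real ^ ('a::{ab_group_add,finite}) \<Rightarrow> bool" where
  "adjacent g0 x y \<longleftrightarrow> is_vertex g0 x \<and> is_vertex g0 y \<and> x \<noteq> y
      \<and> closed_segment x y face_of corner g0"

text \<open>mu-operations: MuPair h f is mu_{h,f}, MuOne h is mu_h.\<close>
datatype 'a muop = MuPair 'a 'a | MuOne 'a

definition supp :: "('a::ab_group_add \<Rightarrow> nat) \<Rightarrow> 'a set" where
  "supp t = {g. g \<noteq> 0 \<and> t g > 0}"

fun applicable :: "('a::ab_group_add \<Rightarrow> nat) \<Rightarrow> 'a muop \<Rightarrow> bool" where
  "applicable t (MuPair h f) \<longleftrightarrow> h \<in> supp t \<and> f \<in> supp t \<and> h \<noteq> f \<and> t h \<le> t f \<and> h + f \<noteq> 0"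
| "applicable t (MuOne h) \<longleftrightarrow> h \<in> supp t \<and> t h > 1 \<and> nsm (t h) h \<noteq> 0"

fun apply_mu :: "('a::ab_group_add \<Rightarrow> nat) \<Rightarrow> 'a muop \<Rightarrow> ('a \<Rightarrow> nat)" where
  "apply_mu t (MuPair h f) =
     (\<lambda>g. if g = h then 0 else if g = f then t f - t h
          else if g = h + f then t (h + f) + t h else t g)"
| "apply_mu t (MuOne h) =
     (let s = t(h := 0) in s(nsm (t h) h := s (nsm (t h) h) + 1))"

fun lead :: "'a muop \<Rightarrow> 'a" where
  "lead (MuPair h f) = h"
| "lead (MuOne h) = h"

fun new_elem :: "('a::ab_group_add \<Rightarrow> nat) \<Rightarrow> 'a muop \<Rightarrow> 'a" where
  "new_elem t (MuPair h f) = h + f"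
| "new_elem t (MuOne h) = nsm (t h) h"

end

theory Submission
  imports Defs
begin

lemma nsm_add: "nsm (a + b) g = nsm a g + nsm b g"
  by (induction a) (auto simp: algebra_simps)

lemma nsm_mult: "nsm (a * b) g = nsm a (nsm b g)"
  by (induction a) (auto simp: nsm_add)

lemma nsm_plus: "nsm a (g + h) = nsm a g + nsm a h"
  by (induction a) (auto simp: algebra_simps)

lemma nsm_zero[simp]: "nsm a 0 = 0"
  by (induction a) auto

lemma nsm_one[simp]: "nsm 1 g = g"
  by simp

lemma nsm_sum: "finite A \<Longrightarrow> nsm a (\<Sum>x\<in>A. f x) = (\<Sum>x\<in>A. nsm a (f x))"
  by (induction A rule: finite_induct) (auto simp: nsm_plus)

definition SG :: "('a::{ab_group_add,finite} \<Rightarrow> nat) \<Rightarrow> 'a" where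
  "SG t = (\<Sum>g\<in>UNIV - {0}. nsm (t g) g)"

lemma SG_add: "SG (\<lambda>g. a g + b g) = SG a + SG b"
  by (simp add: SG_def nsm_add sum.distrib)

lemma SG_mult: "SG (\<lambda>g. c * a g) = nsm c (SG a)"
  by (simp add: SG_def nsm_mult nsm_sum)

definition e :: "'a \<Rightarrow> 'a \<Rightarrow> nat" where "e x = (\<lambda>g. if g = x then 1 else 0)"

lemma SG_e: "x \<noteq> (0::'a::{ab_group_add,finite}) \<Longrightarrow> SG (e x) = x"
proof -
  assume x: "x \<noteq> 0"
  have "SG (e x) = (\<Sum>g\<in>UNIV - {0}. if g = x then x else 0)"
    unfolding SG_def e_def by (rule sum.cong) auto
  also have "\<dots> = x" using x by (simp add: sum.delta)
  finally show ?thesis .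
qed

lemma SG_scaled_e: "x \<noteq> (0::'a::{ab_group_add,finite}) \<Longrightarrow> SG (\<lambda>g. if g = x then a else 0) = nsm a x"
proof -
  assume x: "x \<noteq> 0"
  have "SG (\<lambda>g. if g = x then a else 0) = (\<Sum>g\<in>UNIV - {0}. if g = x then nsm a x else 0)"
    unfolding SG_def by (rule sum.cong) auto
  also have "\<dots> = nsm a x" using x by (simp add: sum.delta)
  finally show ?thesis .
qed

lemma Tset_iff: "t \<in> Tset g0 \<longleftrightarrow> t 0 = 0 \<and> SG t = g0 \<and> (g0 = 0 \<longrightarrow> (\<exists>g. t g \<noteq> 0))"
  by (simp add: Tset_def SG_def)

lemma exchange:
  assumes p: "p \<in> Tset g0" and eq: "\<And>g. p g + c g = q g + d g" and cd: "SG c = SG d"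
    and q0: "q 0 = 0" and qnz: "\<exists>g. q g \<noteq> 0"
  shows "q \<in> Tset g0"
proof -
  have "SG (\<lambda>g. p g + c g) = SG (\<lambda>g. q g + d g)" using eq by simp
  then have "SG p + SG c = SG q + SG d" by (simp add: SG_add)
  then have "SG q = SG p" using cd by simp
  then show ?thesis using p q0 qnz by (simp add: Tset_iff)
qed

fun rp :: "('a::ab_group_add \<Rightarrow> nat) \<Rightarrow> 'a muop \<Rightarrow> 'a \<Rightarrow> nat" where
  "rp t (MuPair h f) = (\<lambda>g. e h g + e f g)"
| "rp t (MuOne h) = (\<lambda>g. if g = h then t h else 0)"

fun kap :: "('a::ab_group_add \<Rightarrow> nat) \<Rightarrow> 'a muop \<Rightarrow> nat" where
  "kap t (MuPair h f) = t h"
| "kap t (MuOne h) = 1"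

definition rn :: "('a::ab_group_add \<Rightarrow> nat) \<Rightarrow> 'a muop \<Rightarrow> 'a \<Rightarrow> nat" where
  "rn t \<nu> = e (new_elem t \<nu>)"

lemma app_lead0: "applicable t \<nu> \<Longrightarrow> lead \<nu> \<noteq> 0"
  by (cases \<nu>) (auto simp: supp_def)

lemma app_new0: "applicable t \<nu> \<Longrightarrow> new_elem t \<nu> \<noteq> 0"
  by (cases \<nu>) (auto simp: supp_def)

lemma app_kap: "applicable t \<nu> \<Longrightarrow> kap t \<nu> > 0"
  by (cases \<nu>) (auto simp: supp_def)

lemma app_stepeq: "applicable t \<nu> \<Longrightarrow>
   apply_mu t \<nu> g + kap t \<nu> * rp t \<nu> g = t g + kap t \<nu> * rn t \<nu> g"
proof (cases \<nu>)
  case (MuPair h f)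
  assume a: "applicable t \<nu>"
  then have hf: "h \<noteq> f" "t h \<le> t f" "h \<noteq> 0" "f \<noteq> 0" using MuPair by (auto simp: supp_def)
  then have "h + f \<noteq> h" "h + f \<noteq> f" by auto
  then show ?thesis using MuPair hf by (auto simp: e_def rn_def)
next
  case (MuOne h)
  then show ?thesis by (auto simp: e_def rn_def Let_def)
qed

lemma app_SG: "applicable (t::'a::{ab_group_add,finite} \<Rightarrow> nat) \<nu> \<Longrightarrow> SG (rp t \<nu>) = new_elem t \<nu> \<and> SG (rn t \<nu>) = new_elem t \<nu>"
proof (cases \<nu>)
  case (MuPair h f)
  assume a: "applicable t \<nu>"
  then have "h \<noteq> 0" "f \<noteq> 0" using MuPair by (auto simp: supp_def)
  then have "SG (rp t \<nu>) = h + f" using MuPair by (simp add: SG_add SG_e)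
  moreover have "SG (rn t \<nu>) = new_elem t \<nu>" using app_new0[OF a] by (simp add: rn_def SG_e)
  ultimately show ?thesis using MuPair by simp
next
  case (MuOne h)
  assume a: "applicable t \<nu>"
  then have "h \<noteq> 0" using MuOne by (auto simp: supp_def)
  then have "SG (rp t \<nu>) = nsm (t h) h" using MuOne by (simp add: SG_scaled_e)
  moreover have "SG (rn t \<nu>) = new_elem t \<nu>" using app_new0[OF a] by (simp add: rn_def SG_e)
  ultimately show ?thesis using MuOne by simp
qed

lemma app_rp_le: "applicable t \<nu> \<Longrightarrow> rp t \<nu> g \<le> t g"
  by (cases \<nu>) (auto simp: supp_def e_def)

lemma app_rp0: "applicable t \<nu> \<Longrightarrow> rp t \<nu> 0 = 0"
  by (cases \<nu>) (auto simp: supp_def e_def)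

lemma app_rn0: "applicable t \<nu> \<Longrightarrow> rn t \<nu> 0 = 0"
  using app_new0 by (auto simp: rn_def e_def)

lemma app_lead: "applicable t \<nu> \<Longrightarrow> t (lead \<nu>) = kap t \<nu> * rp t \<nu> (lead \<nu>) \<and> rp t \<nu> (lead \<nu>) > 0"
  by (cases \<nu>) (auto simp: supp_def e_def)

lemma app_rp_new: "applicable t \<nu> \<Longrightarrow> new_elem t \<nu> \<noteq> lead \<nu> \<Longrightarrow> rp t \<nu> (new_elem t \<nu>) = 0"
proof (cases \<nu>)
  case (MuPair h f)
  assume a: "applicable t \<nu>"
  then have "h \<noteq> 0" "f \<noteq> 0" using MuPair by (auto simp: supp_def)
  then have "h + f \<noteq> h" "h + f \<noteq> f" by auto
  then show ?thesis using MuPair by (simp add: e_def)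
qed auto

lemma app_new_pos: "applicable t \<nu> \<Longrightarrow> apply_mu t \<nu> (new_elem t \<nu>) > 0"
proof (cases \<nu>)
  case (MuPair h f)
  assume a: "applicable t \<nu>"
  then have "h \<noteq> 0" "f \<noteq> 0" "t h > 0" using MuPair by (auto simp: supp_def)
  then have "h + f \<noteq> h" "h + f \<noteq> f" by auto
  then show ?thesis using MuPair \<open>t h > 0\<close> by simp
qed (auto simp: Let_def)

lemma app_T: "applicable t \<nu> \<Longrightarrow> t \<in> Tset g0 \<Longrightarrow> apply_mu t \<nu> \<in> Tset g0"
proof -
  assume a: "applicable t \<nu>" and t: "t \<in> Tset g0"
  let ?k = "kap t \<nu>"
  show ?thesis
  proof (rule exchange[OF t, of "\<lambda>g. ?k * rn t \<nu> g" _ "\<lambda>g. ?k * rp t \<nu> g"])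
    show "\<And>g. t g + ?k * rn t \<nu> g = apply_mu t \<nu> g + ?k * rp t \<nu> g"
      using app_stepeq[OF a] by simp
    show "SG (\<lambda>g. ?k * rn t \<nu> g) = SG (\<lambda>g. ?k * rp t \<nu> g)"
      using app_SG[OF a] by (simp add: SG_mult)
    have "apply_mu t \<nu> 0 + ?k * rp t \<nu> 0 = t 0 + ?k * rn t \<nu> 0" by (rule app_stepeq[OF a])
    then show "apply_mu t \<nu> 0 = 0" using t app_rp0[OF a] app_rn0[OF a] by (simp add: Tset_def)
    show "\<exists>g. apply_mu t \<nu> g \<noteq> 0" using app_new_pos[OF a] by (metis less_irrefl)
  qed
qed

definition mass :: "('a::finite \<Rightarrow> nat) \<Rightarrow> nat" where "mass t = (\<Sum>g\<in>UNIV. t g)"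

lemma mass_e: "mass (e x) = 1"
  by (simp add: mass_def e_def)

lemma app_mass_rp: "applicable (t::'a::{ab_group_add,finite} \<Rightarrow> nat) \<nu> \<Longrightarrow> mass (rp t \<nu>) \<ge> 2"
proof (cases \<nu>)
  case (MuPair h f)
  assume a: "applicable t \<nu>"
  then have "h \<noteq> f" using MuPair by auto
  have "mass (rp t \<nu>) = mass (e h) + mass (e f)" using MuPair by (simp add: mass_def sum.distrib)
  then show ?thesis by (simp add: mass_e)
next
  case (MuOne h)
  assume a: "applicable t \<nu>"
  have "mass (rp t \<nu>) = t h" using MuOne by (simp add: mass_def)
  then show ?thesis using a MuOne by simp
qed

lemma app_mass_rn: "mass (rn t \<nu>) = 1"
  by (simp add: rn_def mass_e)

lemma mass_add: "mass (\<lambda>g. a g + b g) = mass a + mass b"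
  by (simp add: mass_def sum.distrib)

lemma mass_mult: "mass (\<lambda>g. c * a g) = c * mass a"
  by (simp add: mass_def sum_distrib_left)

lemma app_mass: "applicable t \<nu> \<Longrightarrow> mass (apply_mu t \<nu>) < mass t"
proof -
  assume a: "applicable t \<nu>"
  let ?k = "kap t \<nu>"
  have "mass (\<lambda>g. apply_mu t \<nu> g + ?k * rp t \<nu> g) = mass (\<lambda>g. t g + ?k * rn t \<nu> g)"
    using app_stepeq[OF a] by simp
  then have "mass (apply_mu t \<nu>) + ?k * mass (rp t \<nu>) = mass t + ?k"
    by (simp add: mass_add mass_mult app_mass_rn)
  moreover have "?k > 0" using app_kap[OF a] .
  moreover have "mass (rp t \<nu>) \<ge> 2" using app_mass_rp[OF a] .
  moreover have "?k * 2 \<le> ?k * mass (rp t \<nu>)" using app_mass_rp[OF a] by simp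
  ultimately show ?thesis by linarith
qed

lemma Tset_nz: "t \<in> Tset g0 \<Longrightarrow> \<exists>g. t g \<noteq> 0"
proof (rule ccontr)
  assume t: "t \<in> Tset g0" and "\<not> (\<exists>g. t g \<noteq> 0)"
  then have "\<And>g. t g = 0" by auto
  then have "SG t = 0" by (simp add: SG_def)
  then show False using t \<open>\<And>g. t g = 0\<close> by (auto simp: Tset_iff)
qed

definition onseg :: "('a \<Rightarrow> nat) \<Rightarrow> ('a \<Rightarrow> nat) \<Rightarrow> ('a \<Rightarrow> real) \<Rightarrow> bool" where
  "onseg u v x \<longleftrightarrow> (\<exists>\<theta>. 0 \<le> \<theta> \<and> \<theta> \<le> 1 \<and> (\<forall>g. x g = (1 - \<theta>) * real (u g) + \<theta> * real (v g)))"

definition DCseg :: "'a::{ab_group_add,finite} \<Rightarrow> ('a \<Rightarrow> nat) \<Rightarrow> ('a \<Rightarrow> nat) \<Rightarrow> bool" where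
  "DCseg g0 u v \<longleftrightarrow> (\<forall>(I::(('a \<Rightarrow> nat) \<times> bool) set) p l. finite I \<longrightarrow>
      (\<forall>k\<in>I. p k \<in> Tset g0 \<and> 0 < l k) \<longrightarrow> sum l I = 1 \<longrightarrow>
      onseg u v (\<lambda>g. \<Sum>k\<in>I. l k * real (p k g)) \<longrightarrow> (\<forall>k\<in>I. onseg u v (\<lambda>g. real (p k g))))"

lemma DCsegD: fixes g0 :: "'a::{ab_group_add,finite}" and I :: "(('a \<Rightarrow> nat) \<times> bool) set"
  shows "DCseg g0 u v \<Longrightarrow> finite I \<Longrightarrow> (\<And>k. k\<in>I \<Longrightarrow> p k \<in> Tset g0) \<Longrightarrow> (\<And>k. k\<in>I \<Longrightarrow> 0 < l k)
   \<Longrightarrow> sum l I = 1 \<Longrightarrow> onseg u v (\<lambda>g. \<Sum>k\<in>I. l k * real (p k g)) \<Longrightarrow> k \<in> I \<Longrightarrow> onseg u v (\<lambda>g. real (p k g))"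
proof -
  assume D: "DCseg g0 u v" and f: "finite I" and T: "\<And>k. k\<in>I \<Longrightarrow> p k \<in> Tset g0" and l: "\<And>k. k\<in>I \<Longrightarrow> 0 < l k"
    and s: "sum l I = 1" and o: "onseg u v (\<lambda>g. \<Sum>k\<in>I. l k * real (p k g))" and k: "k \<in> I"
  have H: "finite I \<longrightarrow> (\<forall>k\<in>I. p k \<in> Tset g0 \<and> 0 < l k) \<longrightarrow> sum l I = 1 \<longrightarrow>
      onseg u v (\<lambda>g. \<Sum>k\<in>I. l k * real (p k g)) \<longrightarrow> (\<forall>k\<in>I. onseg u v (\<lambda>g. real (p k g)))"
    using spec[OF spec[OF spec[OF D[unfolded DCseg_def], of I], of p], of l] .
  have "\<forall>k\<in>I. p k \<in> Tset g0 \<and> 0 < l k" using T l by blast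
  then show ?thesis using H f s o k by blast
qed

lemma two_point:
  assumes D: "DCseg g0 u v" and q: "q1 \<in> Tset g0" "q2 \<in> Tset g0" and eq: "\<And>g. q1 g + q2 g = u g + v g"
  shows "onseg u v (\<lambda>g. real (q2 g))"
proof -
  let ?I = "{(q1, True), (q2, False)}"
  have "onseg u v (\<lambda>g. real (fst k g))" if "k \<in> ?I" for k
  proof (rule DCsegD[OF D, of ?I fst "\<lambda>_. 1/2"])
    show "onseg u v (\<lambda>g. \<Sum>k\<in>?I. 1/2 * real (fst k g))"
      unfolding onseg_def
    proof (intro exI[of _ "1/2"] conjI allI)
      fix g
      have "real (q1 g) + real (q2 g) = real (u g) + real (v g)" using eq[of g] by (metis of_nat_add)
      then show "(\<Sum>k\<in>?I. 1/2 * real (fst k g)) = (1 - 1/2) * real (u g) + 1/2 * real (v g)"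
        by simp
    qed auto
  qed (use q that in auto)
  from this[of "(q2, False)"] show ?thesis by simp
qed

lemma onseg_mass:
  assumes "onseg u v (\<lambda>g. real (q g))"
  shows "mass q \<ge> min (mass u) (mass v)"
proof -
  obtain \<theta> where th: "0 \<le> \<theta>" "\<theta> \<le> 1" "\<And>g. real (q g) = (1 - \<theta>) * real (u g) + \<theta> * real (v g)"
    using assms unfolding onseg_def by blast
  have "real (mass q) = (\<Sum>g\<in>UNIV. real (q g))" by (simp add: mass_def)
  also have "\<dots> = (1 - \<theta>) * real (mass u) + \<theta> * real (mass v)"
    by (simp add: th(3) sum.distrib sum_distrib_left mass_def)
  finally have m: "real (mass q) = (1 - \<theta>) * real (mass u) + \<theta> * real (mass v)" .
  have "(1 - \<theta>) * real (mass u) \<ge> (1 - \<theta>) * real (min (mass u) (mass v))"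
    using th by (intro mult_left_mono) auto
  moreover have "\<theta> * real (mass v) \<ge> \<theta> * real (min (mass u) (mass v))"
    using th by (intro mult_left_mono) auto
  ultimately have "real (mass q) \<ge> real (min (mass u) (mass v))" using m by (simp add: algebra_simps)
  then show ?thesis by linarith
qed

lemma no_exchange:
  assumes D: "DCseg g0 u v" and uT: "u \<in> Tset g0" and vT: "v \<in> Tset g0"
    and m: "mass v \<le> mass u" and a: "applicable v \<nu>" and un: "u (new_elem v \<nu>) \<ge> 1"
  shows False
proof -
  let ?n = "new_elem v \<nu>" and ?rp = "rp v \<nu>" and ?rn = "rn v \<nu>"
  have rn: "?rn g = (if g = ?n then 1 else 0)" for g by (simp add: rn_def e_def)
  define q1 where "q1 = (\<lambda>g. u g + ?rp g - ?rn g)"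
  define q2 where "q2 = (\<lambda>g. v g - ?rp g + ?rn g)"
  have le: "?rp g \<le> v g" for g by (rule app_rp_le[OF a])
  have e1: "u g + ?rp g = q1 g + ?rn g" for g using un unfolding q1_def rn by auto
  have e2: "v g + ?rn g = q2 g + ?rp g" for g using le[of g] unfolding q2_def by auto
  have SGe: "SG ?rp = SG ?rn" using app_SG[OF a] by simp
  have lp: "?rp (lead \<nu>) > 0" using app_lead[OF a] by simp
  have q1T: "q1 \<in> Tset g0"
  proof (rule exchange[OF uT e1 SGe])
    show "q1 0 = 0" using uT app_rp0[OF a] app_rn0[OF a] by (simp add: q1_def Tset_def)
    have "q1 (lead \<nu>) \<ge> ?rp (lead \<nu>)" using un unfolding q1_def rn by auto
    then show "\<exists>g. q1 g \<noteq> 0" using lp by (metis not_gr0 le_zero_eq)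
  qed
  have q2T: "q2 \<in> Tset g0"
  proof (rule exchange[OF vT e2 SGe[symmetric]])
    show "q2 0 = 0" using vT app_rp0[OF a] app_rn0[OF a] by (simp add: q2_def Tset_def)
    have "q2 ?n \<ge> 1" unfolding q2_def rn by auto
    then show "\<exists>g. q2 g \<noteq> 0" by (metis not_one_le_zero)
  qed
  have sum: "q1 g + q2 g = u g + v g" for g using le[of g] un unfolding q1_def q2_def rn by auto
  have "onseg u v (\<lambda>g. real (q2 g))" by (rule two_point[OF D q1T q2T sum])
  then have "mass q2 \<ge> mass v" using onseg_mass m by fastforce
  moreover have "mass q2 + mass ?rp = mass v + mass ?rn"
  proof -
    have "(\<lambda>g. q2 g + ?rp g) = (\<lambda>g. v g + ?rn g)" using e2 by (simp add: fun_eq_iff)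
    then show ?thesis by (metis mass_add)
  qed
  moreover have "mass ?rp \<ge> 2" by (rule app_mass_rp[OF a])
  ultimately show False by (simp add: app_mass_rn)
qed

lemma ext_step:
  fixes g0 :: "'a::{ab_group_add,finite}"
  assumes uT: "u \<in> Tset g0" and Du: "DCseg g0 u v"
    and cas: "u = v \<or> (u \<noteq> v \<and> u (lead \<nu>) = 0)"
    and a: "applicable v \<nu>" and vn: "v (new_elem v \<nu>) = 0" and un: "u (new_elem v \<nu>) = 0"
    and hn: "new_elem v \<nu> \<noteq> lead \<nu>"
  shows "DCseg g0 u (apply_mu v \<nu>)"
  unfolding DCseg_def
proof (intro allI impI ballI)
  fix I :: "(('a \<Rightarrow> nat) \<times> bool) set" and p l k
  assume fin: "finite I" and pl: "\<forall>k\<in>I. p k \<in> Tset g0 \<and> 0 < l k" and s1: "sum l I = 1"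
    and os: "onseg u (apply_mu v \<nu>) (\<lambda>g. \<Sum>k\<in>I. l k * real (p k g))" and kI: "k \<in> I"
  define w where "w = apply_mu v \<nu>"
  define n where "n = new_elem v \<nu>"
  define h where "h = lead \<nu>"
  define \<kappa> where "\<kappa> = kap v \<nu>"
  define R where "R = rp v \<nu>"
  define N where "N = rn v \<nu>"
  have N: "N g = (if g = n then 1 else 0)" for g by (simp add: N_def rn_def e_def n_def)
  have st: "w g + \<kappa> * R g = v g + \<kappa> * N g" for g
    unfolding w_def \<kappa>_def R_def N_def by (rule app_stepeq[OF a])
  have st': "real (w g) = real (v g) + real \<kappa> * (real (N g) - real (R g))" for g
    using st[of g] by (simp add: algebra_simps) (metis of_nat_add of_nat_mult)
  have Rn: "R n = 0" unfolding R_def n_def using app_rp_new[OF a hn] .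
  have hn': "h \<noteq> n" using hn by (simp add: h_def n_def)
  have vh: "v h = \<kappa> * R h" and Rh: "R h > 0" using app_lead[OF a] by (simp_all add: h_def \<kappa>_def R_def)
  have kpos: "\<kappa> > 0" using app_kap[OF a] by (simp add: \<kappa>_def)
  have wn: "w n = \<kappa>" using st[of n] Rn vn by (simp add: N n_def)
  have SGe: "SG R = SG N" using app_SG[OF a] by (simp add: R_def N_def)
  have R0: "R 0 = 0" and N0: "N 0 = 0" using app_rp0[OF a] app_rn0[OF a] by (simp_all add: R_def N_def)
  define \<gamma> where "\<gamma> k = p k n" for k
  define y where "y k = (\<lambda>g. p k g + \<gamma> k * R g - \<gamma> k * N g)" for k
  have yeq: "p k g + \<gamma> k * R g = y k g + \<gamma> k * N g" for k g
    unfolding y_def using N[of g] Rn by (auto simp: \<gamma>_def)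
  have yr: "real (y k g) = real (p k g) + real (\<gamma> k) * (real (R g) - real (N g))" for k g
    using yeq[of k g] by (simp add: algebra_simps) (metis of_nat_add of_nat_mult)
  have yT: "y k \<in> Tset g0" if "k \<in> I" for k
  proof (rule exchange[of "p k" g0 "\<lambda>g. \<gamma> k * R g" "y k" "\<lambda>g. \<gamma> k * N g"])
    show "p k \<in> Tset g0" using pl that by auto
    show "\<And>g. p k g + \<gamma> k * R g = y k g + \<gamma> k * N g" by (rule yeq)
    show "SG (\<lambda>g. \<gamma> k * R g) = SG (\<lambda>g. \<gamma> k * N g)" by (simp add: SG_mult SGe)
    show "y k 0 = 0" using pl that R0 N0 by (simp add: y_def Tset_def)
    show "\<exists>g. y k g \<noteq> 0"
    proof (cases "\<gamma> k = 0")
      case True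
      then have "y k = p k" by (simp add: y_def fun_eq_iff)
      then show ?thesis using pl that Tset_nz by metis
    next
      case False
      have "y k h = p k h + \<gamma> k * R h" using yeq[of k h] N[of h] hn' by simp
      then have "y k h > 0" using False Rh by simp
      then show ?thesis by (metis less_irrefl)
    qed
  qed
  obtain \<theta> where th: "0 \<le> \<theta>" "\<theta> \<le> 1"
    "\<And>g. (\<Sum>k\<in>I. l k * real (p k g)) = (1 - \<theta>) * real (u g) + \<theta> * real (w g)"
    using os unfolding onseg_def w_def by blast
  have sg: "(\<Sum>k\<in>I. l k * real (\<gamma> k)) = \<theta> * real \<kappa>"
    using th(3)[of n] un wn by (simp add: \<gamma>_def n_def)
  have sy: "(\<Sum>k\<in>I. l k * real (y k g)) = (1 - \<theta>) * real (u g) + \<theta> * real (v g)" for g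
  proof -
    have "(\<Sum>k\<in>I. l k * real (y k g)) = (\<Sum>k\<in>I. l k * real (p k g)) + (\<Sum>k\<in>I. l k * real (\<gamma> k)) * (real (R g) - real (N g))"
    proof -
      have "(\<Sum>k\<in>I. l k * real (y k g)) = (\<Sum>k\<in>I. l k * real (p k g) + (l k * real (\<gamma> k)) * (real (R g) - real (N g)))"
        by (rule sum.cong) (auto simp: yr algebra_simps)
      also have "\<dots> = (\<Sum>k\<in>I. l k * real (p k g)) + (\<Sum>k\<in>I. l k * real (\<gamma> k)) * (real (R g) - real (N g))"
        by (simp add: sum.distrib sum_distrib_right)
      finally show ?thesis .
    qed
    also have "\<dots> = (1 - \<theta>) * real (u g) + \<theta> * real (v g)"
      using th(3)[of g] sg st'[of g] by (simp add: algebra_simps)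
    finally show ?thesis .
  qed
  have yseg: "onseg u v (\<lambda>g. real (y k g))" if "k \<in> I" for k
  proof (rule DCsegD[OF Du fin _ _ s1 _ that])
    show "\<And>k. k \<in> I \<Longrightarrow> y k \<in> Tset g0" by (rule yT)
    show "\<And>k. k \<in> I \<Longrightarrow> 0 < l k" using pl by auto
    show "onseg u v (\<lambda>g. \<Sum>k\<in>I. l k * real (y k g))"
      unfolding onseg_def using th(1,2) sy by blast
  qed
  have pr: "real (p k g) = real (y k g) - real (\<gamma> k) * (real (R g) - real (N g))" for k g
    using yr[of k g] by simp
  show "onseg u (apply_mu v \<nu>) (\<lambda>g. real (p k g))"
    using cas
  proof
    assume uv: "u = v"
    have yk: "real (y k g) = real (u g)" for g
    proof -
      obtain \<beta> where "\<forall>g. real (y k g) = (1 - \<beta>) * real (u g) + \<beta> * real (v g)"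
        using yseg[OF kI] unfolding onseg_def by blast
      then show ?thesis using uv by (simp add: algebra_simps)
    qed
    have "0 \<le> real (p k h)" by simp
    then have "real (\<gamma> k) * real (R h) \<le> real \<kappa> * real (R h)"
      using pr[of k h] yk[of h] N[of h] hn' vh uv by (simp add: algebra_simps)
    then have gk: "real (\<gamma> k) \<le> real \<kappa>" using Rh by simp
    show ?thesis unfolding onseg_def w_def[symmetric]
    proof (intro exI[of _ "real (\<gamma> k) / real \<kappa>"] conjI allI)
      show "0 \<le> real (\<gamma> k) / real \<kappa>" by simp
      show "real (\<gamma> k) / real \<kappa> \<le> 1" using gk kpos by simp
      fix g
      have "(1 - real (\<gamma> k) / real \<kappa>) * real (u g) + real (\<gamma> k) / real \<kappa> * real (w g)
          = real (u g) + real (\<gamma> k) / real \<kappa> * (real (w g) - real (u g))" by (simp add: algebra_simps)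
      also have "\<dots> = real (u g) - real (\<gamma> k) * (real (R g) - real (N g))"
      proof -
        have "real (w g) = real (u g) + real \<kappa> * (real (N g) - real (R g))" using st'[of g] uv by simp
        then have "real (\<gamma> k) / real \<kappa> * (real (w g) - real (u g)) = real (\<gamma> k) / real \<kappa> * (real \<kappa> * (real (N g) - real (R g)))"
          by simp
        also have "\<dots> = real (\<gamma> k) * (real (N g) - real (R g))" using kpos by simp
        finally show ?thesis by (simp add: algebra_simps)
      qed
      finally show "real (p k g) = (1 - real (\<gamma> k) / real \<kappa>) * real (u g) + real (\<gamma> k) / real \<kappa> * real (w g)"
        using pr[of k g] yk[of g] by simp
    qed
  next
    assume "u \<noteq> v \<and> u (lead \<nu>) = 0"
    then have uv: "u \<noteq> v" and uh: "u h = 0" by (auto simp: h_def)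
    have "\<forall>k\<in>I. \<exists>\<beta>. 0 \<le> \<beta> \<and> \<beta> \<le> 1 \<and> (\<forall>g. real (y k g) = (1 - \<beta>) * real (u g) + \<beta> * real (v g))"
      using yseg unfolding onseg_def by blast
    then obtain \<beta> where bt: "\<And>k. k \<in> I \<Longrightarrow> 0 \<le> \<beta> k \<and> \<beta> k \<le> 1 \<and> (\<forall>g. real (y k g) = (1 - \<beta> k) * real (u g) + \<beta> k * real (v g))"
      by metis
    obtain g1 where g1: "u g1 \<noteq> v g1" using uv by auto
    have "(\<Sum>k\<in>I. l k * real (y k g1)) = real (u g1) + (\<Sum>k\<in>I. l k * \<beta> k) * (real (v g1) - real (u g1))"
    proof -
      have "(\<Sum>k\<in>I. l k * real (y k g1)) = (\<Sum>k\<in>I. l k * real (u g1) + l k * \<beta> k * (real (v g1) - real (u g1)))"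
        by (rule sum.cong) (auto simp: bt algebra_simps)
      also have "\<dots> = real (u g1) + (\<Sum>k\<in>I. l k * \<beta> k) * (real (v g1) - real (u g1))"
        by (simp add: sum.distrib sum_distrib_right[symmetric] s1)
      finally show ?thesis .
    qed
    then have "(\<Sum>k\<in>I. l k * \<beta> k) * (real (v g1) - real (u g1)) = \<theta> * (real (v g1) - real (u g1))"
      using sy[of g1] by (simp add: algebra_simps)
    then have sb: "(\<Sum>k\<in>I. l k * \<beta> k) = \<theta>" using g1 by simp
    have gle: "real (\<gamma> k) \<le> \<beta> k * real \<kappa>" if "k \<in> I" for k
    proof -
      have "0 \<le> real (p k h)" by simp
      then have "real (\<gamma> k) * real (R h) \<le> \<beta> k * (real \<kappa> * real (R h))"
        using pr[of k h] bt[OF that] N[of h] hn' vh uh by (simp add: algebra_simps)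
      then show ?thesis using Rh by (simp add: mult.assoc[symmetric])
    qed
    have "(\<Sum>k\<in>I. l k * (\<beta> k * real \<kappa> - real (\<gamma> k))) = (\<Sum>k\<in>I. (l k * \<beta> k) * real \<kappa>) - (\<Sum>k\<in>I. l k * real (\<gamma> k))"
      by (simp add: sum_subtractf algebra_simps)
    also have "\<dots> = (\<Sum>k\<in>I. l k * \<beta> k) * real \<kappa> - (\<Sum>k\<in>I. l k * real (\<gamma> k))"
      by (simp add: sum_distrib_right)
    also have "\<dots> = 0" using sb sg by simp
    finally have "(\<Sum>k\<in>I. l k * (\<beta> k * real \<kappa> - real (\<gamma> k))) = 0" .
    moreover have "\<forall>k\<in>I. 0 \<le> l k * (\<beta> k * real \<kappa> - real (\<gamma> k))"
      using gle pl by (auto intro!: mult_nonneg_nonneg)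
    ultimately have "\<forall>k\<in>I. l k * (\<beta> k * real \<kappa> - real (\<gamma> k)) = 0"
      using sum_nonneg_eq_0_iff[OF fin, of "\<lambda>k. l k * (\<beta> k * real \<kappa> - real (\<gamma> k))"] by simp
    then have "l k = 0 \<or> \<beta> k * real \<kappa> = real (\<gamma> k)" using kI by auto
    moreover have "l k \<noteq> 0" using kI pl by auto
    ultimately have geq: "real (\<gamma> k) = \<beta> k * real \<kappa>" by auto
    show ?thesis unfolding onseg_def w_def[symmetric]
    proof (intro exI[of _ "\<beta> k"] conjI allI)
      show "0 \<le> \<beta> k" "\<beta> k \<le> 1" using bt[OF kI] by auto
      fix g
      have Y: "real (y k g) = (1 - \<beta> k) * real (u g) + \<beta> k * real (v g)" using bt[OF kI] by blast
      show "real (p k g) = (1 - \<beta> k) * real (u g) + \<beta> k * real (w g)"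
        unfolding pr[of k g] Y geq st'[of g] by (simp add: algebra_simps)
    qed
  qed
qed

lemma onseg_same: "onseg v v x \<longleftrightarrow> (\<forall>g. x g = real (v g))"
  unfolding onseg_def by (auto simp: algebra_simps intro: exI[of _ 0])

lemma DC_end:
  assumes D: "DCseg g0 u v" and uv: "u \<noteq> v"
  shows "DCseg g0 v v"
  unfolding DCseg_def
proof (intro allI impI ballI)
  fix I :: "(('a \<Rightarrow> nat) \<times> bool) set" and p l k
  assume fin: "finite I" and pl: "\<forall>k\<in>I. p k \<in> Tset g0 \<and> 0 < l k" and s1: "sum l I = 1"
    and os: "onseg v v (\<lambda>g. \<Sum>k\<in>I. l k * real (p k g))" and kI: "k \<in> I"
  have sv: "(\<Sum>k\<in>I. l k * real (p k g)) = real (v g)" for g using os by (simp add: onseg_same)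
  have os': "onseg u v (\<lambda>g. \<Sum>k\<in>I. l k * real (p k g))"
    unfolding onseg_def by (intro exI[of _ 1]) (simp add: sv)
  have "\<forall>k\<in>I. \<exists>\<beta>. 0 \<le> \<beta> \<and> \<beta> \<le> 1 \<and> (\<forall>g. real (p k g) = (1 - \<beta>) * real (u g) + \<beta> * real (v g))"
    using DCsegD[OF D fin _ _ s1 os'] pl unfolding onseg_def by blast
  then obtain \<beta> where bt: "\<And>k. k \<in> I \<Longrightarrow> 0 \<le> \<beta> k \<and> \<beta> k \<le> 1 \<and> (\<forall>g. real (p k g) = (1 - \<beta> k) * real (u g) + \<beta> k * real (v g))"
    by metis
  obtain g1 where g1: "u g1 \<noteq> v g1" using uv by auto
  have "(\<Sum>k\<in>I. l k * real (p k g1)) = (\<Sum>k\<in>I. l k * real (u g1) + l k * \<beta> k * (real (v g1) - real (u g1)))"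
    by (rule sum.cong) (auto simp: bt algebra_simps)
  also have "\<dots> = real (u g1) + (\<Sum>k\<in>I. l k * \<beta> k) * (real (v g1) - real (u g1))"
    by (simp add: sum.distrib sum_distrib_right[symmetric] s1)
  finally have X: "(\<Sum>k\<in>I. l k * real (p k g1)) = real (u g1) + (\<Sum>k\<in>I. l k * \<beta> k) * (real (v g1) - real (u g1))" .
  have "(1 - (\<Sum>k\<in>I. l k * \<beta> k)) * (real (v g1) - real (u g1))
     = (real (v g1) - real (u g1)) - (\<Sum>k\<in>I. l k * \<beta> k) * (real (v g1) - real (u g1))"
    by (simp add: algebra_simps)
  also have "\<dots> = 0" using X sv[of g1] by linarith
  finally have "(1 - (\<Sum>k\<in>I. l k * \<beta> k)) * (real (v g1) - real (u g1)) = 0" .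
  then have sb: "(\<Sum>k\<in>I. l k * \<beta> k) = 1" using g1 by simp
  have "(\<Sum>k\<in>I. l k * (1 - \<beta> k)) = 0"
    using sb s1 by (simp add: algebra_simps sum_subtractf)
  moreover have "\<forall>k\<in>I. 0 \<le> l k * (1 - \<beta> k)" using bt pl by (auto intro!: mult_nonneg_nonneg)
  ultimately have "\<forall>k\<in>I. l k * (1 - \<beta> k) = 0"
    using sum_nonneg_eq_0_iff[OF fin, of "\<lambda>k. l k * (1 - \<beta> k)"] by simp
  then have "l k = 0 \<or> \<beta> k = 1" using kI by auto
  moreover have "l k \<noteq> 0" using kI pl by auto
  ultimately have "\<beta> k = 1" by auto
  then show "onseg v v (\<lambda>g. real (p k g))" using bt[OF kI] by (simp add: onseg_same)
qed

lemma vertex_facts: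
  assumes uT: "u \<in> Tset g0" and vT: "v \<in> Tset g0" and D: "DCseg g0 u v" and m: "mass v \<le> mass u"
    and a: "applicable v \<nu>"
  shows "u (new_elem v \<nu>) = 0"
proof (rule ccontr)
  assume "u (new_elem v \<nu>) \<noteq> 0"
  then show False using no_exchange[OF D uT vT m a] by simp
qed

lemma chain_main:
  fixes t :: "nat \<Rightarrow> ('a::{ab_group_add,finite} \<Rightarrow> nat)" and \<nu> :: "nat \<Rightarrow> 'a muop"
  assumes t0T: "t 0 \<in> Tset g0" and V0: "DCseg g0 (t 0) (t 0)"
    and app: "\<And>i. 1 \<le> i \<Longrightarrow> i \<le> m \<Longrightarrow> applicable (t (i - 1)) (\<nu> i)"
    and step: "\<And>i. 1 \<le> i \<Longrightarrow> i \<le> m \<Longrightarrow> t i = apply_mu (t (i - 1)) (\<nu> i)"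
    and ld: "\<And>i. 1 \<le> i \<Longrightarrow> i \<le> m - 1 \<Longrightarrow> lead (\<nu> (i + 1)) = new_elem (t (i - 1)) (\<nu> i)"
  shows "1 \<le> j \<Longrightarrow> j \<le> m \<Longrightarrow> t j \<in> Tset g0 \<and> DCseg g0 (t 0) (t j) \<and> mass (t j) < mass (t 0)
           \<and> t 0 (new_elem (t (j - 1)) (\<nu> j)) = 0"
proof (induction j)
  case 0
  then show ?case by simp
next
  case (Suc j)
  have a: "applicable (t j) (\<nu> (Suc j))" using app[of "Suc j"] Suc.prems by simp
  have w: "t (Suc j) = apply_mu (t j) (\<nu> (Suc j))" using step[of "Suc j"] Suc.prems by simp
  let ?n = "new_elem (t j) (\<nu> (Suc j))" and ?h = "lead (\<nu> (Suc j))"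
  have hpos: "t j ?h > 0" using app_lead[OF a] app_kap[OF a] by simp
  have facts: "t j \<in> Tset g0 \<and> DCseg g0 (t 0) (t j) \<and> mass (t j) \<le> mass (t 0)
      \<and> (t 0 = t j \<or> (t 0 \<noteq> t j \<and> t 0 ?h = 0))"
  proof (cases "j = 0")
    case True
    then show ?thesis using t0T V0 by simp
  next
    case False
    then have IH: "t j \<in> Tset g0 \<and> DCseg g0 (t 0) (t j) \<and> mass (t j) < mass (t 0)
           \<and> t 0 (new_elem (t (j - 1)) (\<nu> j)) = 0" using Suc by simp
    have "?h = new_elem (t (j - 1)) (\<nu> j)" using ld[of j] False Suc.prems by simp
    then show ?thesis using IH by auto
  qed
  then have tjT: "t j \<in> Tset g0" and D: "DCseg g0 (t 0) (t j)" and m: "mass (t j) \<le> mass (t 0)"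
    and cas: "t 0 = t j \<or> (t 0 \<noteq> t j \<and> t 0 ?h = 0)" by auto
  have Vj: "DCseg g0 (t j) (t j)" using cas D DC_end by metis
  have vn: "t j ?n = 0" by (rule vertex_facts[OF tjT tjT Vj order.refl a])
  have un: "t 0 ?n = 0" by (rule vertex_facts[OF t0T tjT D m a])
  have hn: "?n \<noteq> ?h" using vn hpos by auto
  have "DCseg g0 (t 0) (apply_mu (t j) (\<nu> (Suc j)))"
    by (rule ext_step[OF t0T D cas a vn un hn])
  moreover have "t (Suc j) \<in> Tset g0" using w app_T[OF a tjT] by simp
  moreover have "mass (t (Suc j)) < mass (t 0)" using w app_mass[OF a] m by simp
  ultimately show ?case using w un by simp
qed

lemma vecT_nth[simp]: "vecT t $ g = real (t g)"
  by (simp add: vecT_def)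

lemma vecT_inj: "inj vecT"
  by (rule injI) (simp add: vec_eq_iff fun_eq_iff)

lemma vecT_eq_iff: "vecT s = vecT t \<longleftrightarrow> s = t"
  using vecT_inj by (auto dest: injD)

lemma onseg_vec: "onseg u v f \<longleftrightarrow> (\<chi> g. f g) \<in> closed_segment (vecT u) (vecT v)"
  unfolding onseg_def in_segment(1) by (auto simp: vec_eq_iff)

lemma onseg_vecT: "onseg u v (\<lambda>g. real (t g)) \<longleftrightarrow> vecT t \<in> closed_segment (vecT u) (vecT v)"
  unfolding onseg_vec by (simp add: vecT_def)

lemma sum_vecT: "(\<Sum>k\<in>I. l k *\<^sub>R vecT (p k)) = (\<chi> g. \<Sum>k\<in>I. l k * real (p k g))"
  by (simp add: vec_eq_iff)

lemma face_comb:
  fixes X :: "'i \<Rightarrow> 'v::real_vector"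
  assumes F: "F face_of S" and cS: "convex S" and fin: "finite I"
  shows "(\<forall>k\<in>I. X k \<in> S \<and> 0 < l k) \<Longrightarrow> sum l I = 1 \<Longrightarrow> (\<Sum>k\<in>I. l k *\<^sub>R X k) \<in> F \<Longrightarrow> \<forall>k\<in>I. X k \<in> F"
  using fin
proof (induction I arbitrary: l rule: finite_induct)
  case empty
  then show ?case by simp
next
  case (insert k0 I)
  show ?case
  proof (cases "I = {}")
    case True
    then show ?thesis using insert by simp
  next
    case False
    define c where "c = sum l I"
    have cpos: "c > 0" unfolding c_def using False insert by (intro sum_pos) auto
    have lk: "l k0 = 1 - c" using insert by (simp add: c_def)
    have lkpos: "l k0 > 0" using insert by simp
    define w where "w = (\<Sum>k\<in>I. (l k / c) *\<^sub>R X k)"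
    have sc: "sum (\<lambda>k. l k / c) I = 1" using cpos by (simp add: c_def sum_divide_distrib[symmetric])
    have wS: "w \<in> S" unfolding w_def
      by (rule convex_sum[OF insert(1) cS sc]) (use insert cpos in \<open>auto intro!: divide_nonneg_pos less_imp_le\<close>)
    have xeq: "(\<Sum>k\<in>insert k0 I. l k *\<^sub>R X k) = (1 - c) *\<^sub>R X k0 + c *\<^sub>R w"
      using insert cpos by (simp add: w_def lk scaleR_sum_right)
    have x: "(1 - c) *\<^sub>R X k0 + c *\<^sub>R w \<in> F" using insert xeq by simp
    have Xk0: "X k0 \<in> S" using insert by simp
    have both: "X k0 \<in> F \<and> w \<in> F"
    proof (cases "X k0 = w")
      case True
      then show ?thesis using x by (simp add: algebra_simps flip: scaleR_add_left)
    next
      case False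
      have "(1 - c) *\<^sub>R X k0 + c *\<^sub>R w \<in> open_segment (X k0) w"
        unfolding in_segment(2) using False cpos lk lkpos by auto
      then show ?thesis using face_ofD[OF F _ Xk0 wS x] by blast
    qed
    have "\<forall>k\<in>I. X k \<in> F"
    proof (rule insert.IH[of "\<lambda>k. l k / c"])
      show "\<forall>k\<in>I. X k \<in> S \<and> 0 < l k / c" using insert cpos by auto
      show "sum (\<lambda>k. l k / c) I = 1" by (rule sc)
      show "(\<Sum>k\<in>I. (l k / c) *\<^sub>R X k) \<in> F" using both by (simp add: w_def)
    qed
    then show ?thesis using both by simp
  qed
qed

lemma corner_convex: "convex (corner g0)"
  by (simp add: corner_def)

lemma face_DC:
  fixes g0 :: "'a::{ab_group_add,finite}"
  assumes F: "closed_segment (vecT u) (vecT v) face_of corner g0"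
  shows "DCseg g0 u v"
  unfolding DCseg_def
proof (intro allI impI ballI)
  fix I :: "(('a \<Rightarrow> nat) \<times> bool) set" and p l k
  assume fin: "finite I" and pl: "\<forall>k\<in>I. p k \<in> Tset g0 \<and> 0 < l k" and s1: "sum l I = 1"
    and os: "onseg u v (\<lambda>g. \<Sum>k\<in>I. l k * real (p k g))" and kI: "k \<in> I"
  have "(\<Sum>k\<in>I. l k *\<^sub>R vecT (p k)) \<in> closed_segment (vecT u) (vecT v)"
    using os by (simp add: onseg_vec sum_vecT)
  moreover have "\<forall>k\<in>I. vecT (p k) \<in> corner g0 \<and> 0 < l k"
    using pl by (auto simp: corner_def intro: hull_inc)
  ultimately have "\<forall>k\<in>I. vecT (p k) \<in> closed_segment (vecT u) (vecT v)"
    using face_comb[OF F corner_convex fin, of "\<lambda>k. vecT (p k)" l] s1 by blast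
  then show "onseg u v (\<lambda>g. real (p k g))" using kI by (simp add: onseg_vecT)
qed

lemma conv_rep:
  fixes g0 :: "'a::{ab_group_add,finite}"
  assumes "a \<in> corner g0"
  shows "\<exists>A c. finite A \<and> A \<subseteq> Tset g0 \<and> (\<forall>t\<in>A. 0 < c t) \<and> sum c A = 1 \<and> a = (\<Sum>t\<in>A. c t *\<^sub>R vecT t)"
proof -
  obtain S1 u1 where S1: "finite S1" "S1 \<subseteq> vecT ` Tset g0" "\<forall>x\<in>S1. 0 \<le> u1 x" "sum u1 S1 = 1"
    "(\<Sum>v\<in>S1. u1 v *\<^sub>R v) = a"
    using assms unfolding corner_def convex_hull_explicit by blast
  define A where "A = {t \<in> Tset g0. vecT t \<in> S1 \<and> 0 < u1 (vecT t)}"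
  have fA: "finite A"
  proof -
    have "A \<subseteq> vecT -` S1" by (auto simp: A_def)
    moreover have "finite (vecT -` S1)" by (rule finite_vimageI[OF S1(1) vecT_inj])
    ultimately show ?thesis by (rule finite_subset)
  qed
  have img: "vecT ` A = {x \<in> S1. 0 < u1 x}" using S1(2) by (auto simp: A_def)
  have inj: "inj_on vecT A" using vecT_inj inj_on_subset subset_UNIV by metis
  have "sum u1 S1 = sum u1 {x \<in> S1. 0 < u1 x}"
    using S1(1,3) by (intro sum.mono_neutral_right) auto
  also have "\<dots> = (\<Sum>t\<in>A. u1 (vecT t))" unfolding img[symmetric] by (simp add: sum.reindex[OF inj])
  finally have s: "(\<Sum>t\<in>A. u1 (vecT t)) = 1" using S1(4) by simp
  have "(\<Sum>v\<in>S1. u1 v *\<^sub>R v) = (\<Sum>v\<in>{x \<in> S1. 0 < u1 x}. u1 v *\<^sub>R v)"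
    using S1(1,3) by (intro sum.mono_neutral_right) auto
  also have "\<dots> = (\<Sum>t\<in>A. u1 (vecT t) *\<^sub>R vecT t)" unfolding img[symmetric] by (simp add: sum.reindex[OF inj])
  finally have "a = (\<Sum>t\<in>A. u1 (vecT t) *\<^sub>R vecT t)" using S1(5) by simp
  then show ?thesis using fA s by (intro exI[of _ A] exI[of _ "\<lambda>t. u1 (vecT t)"]) (auto simp: A_def)
qed

lemma sum_times_single: "sum f (A \<times> {b}) = (\<Sum>t\<in>A. f (t, b))"
proof -
  have "A \<times> {b} = (\<lambda>t. (t, b)) ` A" by auto
  moreover have "inj_on (\<lambda>t. (t, b)) A" by (auto simp: inj_on_def)
  ultimately show ?thesis by (simp add: sum.reindex)
qed

lemma DC_face:
  fixes g0 :: "'a::{ab_group_add,finite}"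
  assumes uT: "u \<in> Tset g0" and vT: "v \<in> Tset g0" and D: "DCseg g0 u v"
  shows "closed_segment (vecT u) (vecT v) face_of corner g0"
  unfolding face_of_def
proof (intro conjI ballI impI)
  let ?F = "closed_segment (vecT u) (vecT v)"
  have uC: "vecT u \<in> corner g0" and vC: "vecT v \<in> corner g0"
    using uT vT by (auto simp: corner_def intro: hull_inc)
  show "?F \<subseteq> corner g0"
    using corner_convex[of g0, unfolded convex_contains_segment] uC vC by blast
  show "convex ?F" by simp
  fix a b x
  assume aC: "a \<in> corner g0" and bC: "b \<in> corner g0" and xF: "x \<in> ?F" and xo: "x \<in> open_segment a b"
  obtain A c where A: "finite A" "A \<subseteq> Tset g0" "\<forall>t\<in>A. 0 < c t" "sum c A = 1" "a = (\<Sum>t\<in>A. c t *\<^sub>R vecT t)"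
    using conv_rep[OF aC] by blast
  obtain B d where B: "finite B" "B \<subseteq> Tset g0" "\<forall>t\<in>B. 0 < d t" "sum d B = 1" "b = (\<Sum>t\<in>B. d t *\<^sub>R vecT t)"
    using conv_rep[OF bC] by blast
  obtain \<mu> where mu: "0 < \<mu>" "\<mu> < 1" "x = (1 - \<mu>) *\<^sub>R a + \<mu> *\<^sub>R b"
    using xo unfolding in_segment(2) by blast
  define I where "I = (A \<times> {True}) \<union> (B \<times> {False})"
  define l where "l k = (if snd k then (1 - \<mu>) * c (fst k) else \<mu> * d (fst k))" for k
  have fin: "finite I" using A B by (simp add: I_def)
  have disj: "(A \<times> {True}) \<inter> (B \<times> {False}) = {}" by auto
  have split: "sum f I = (\<Sum>t\<in>A. f (t, True)) + (\<Sum>t\<in>B. f (t, False))" for f :: "_ \<Rightarrow> 'z::comm_monoid_add"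
    unfolding I_def using A B disj by (simp add: sum.union_disjoint sum_times_single)
  have s1: "sum l I = 1"
    unfolding split using A(4) B(4) by (simp add: l_def sum_distrib_left[symmetric])
  have sv: "(\<Sum>k\<in>I. l k *\<^sub>R vecT (fst k)) = x"
    unfolding split mu(3) A(5) B(5) by (simp add: l_def scaleR_sum_right)
  have pos: "\<forall>k\<in>I. fst k \<in> Tset g0 \<and> 0 < l k"
    using A B mu by (auto simp: I_def l_def)
  have os: "onseg u v (\<lambda>g. \<Sum>k\<in>I. l k * real (fst k g))"
    using xF sv by (simp add: onseg_vec sum_vecT)
  have allF: "vecT (fst k) \<in> ?F" if "k \<in> I" for k
    using DCsegD[OF D fin _ _ s1 os that] pos onseg_vecT by blast
  have allA: "vecT t \<in> ?F" if "t \<in> A" for t using allF[of "(t, True)"] that by (simp add: I_def)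
  have allB: "vecT t \<in> ?F" if "t \<in> B" for t using allF[of "(t, False)"] that by (simp add: I_def)
  show "a \<in> ?F"
    unfolding A(5)
    by (rule convex_sum[OF A(1) convex_closed_segment A(4)])
       (use A(3) allA in \<open>auto simp: less_imp_le\<close>)
  show "b \<in> ?F"
    unfolding B(5)
    by (rule convex_sum[OF B(1) convex_closed_segment B(4)])
       (use B(3) allB in \<open>auto simp: less_imp_le\<close>)
qed

lemma vertex_DC:
  assumes "is_vertex g0 (vecT t)"
  shows "t \<in> Tset g0 \<and> DCseg g0 t t"
proof
  have "vecT t \<in> vecT ` Tset g0"
    using assms extreme_point_of_convex_hull unfolding is_vertex_def corner_def by blast
  then show "t \<in> Tset g0" by (auto simp: vecT_eq_iff)
  have "closed_segment (vecT t) (vecT t) face_of corner g0"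
    using assms by (simp add: is_vertex_def face_of_singleton)
  then show "DCseg g0 t t" by (rule face_DC)
qed

lemma DC_vertex:
  assumes "t \<in> Tset g0" "DCseg g0 t t"
  shows "is_vertex g0 (vecT t)"
  using DC_face[OF assms(1) assms(1) assms(2)] by (simp add: is_vertex_def face_of_singleton)

theorem theorem6:
  fixes g0 :: "'a::{ab_group_add,finite}"
    and m :: nat
    and t :: "nat \<Rightarrow> ('a \<Rightarrow> nat)"
    and \<nu> :: "nat \<Rightarrow> 'a muop"
  assumes "m \<ge> 1"
    and "is_vertex g0 (vecT (t 0))"
    and "\<And>i. 1 \<le> i \<Longrightarrow> i \<le> m \<Longrightarrow> applicable (t (i - 1)) (\<nu> i)"
    and "\<And>i. 1 \<le> i \<Longrightarrow> i \<le> m \<Longrightarrow> t i = apply_mu (t (i - 1)) (\<nu> i)"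
    and "\<And>i. 1 \<le> i \<Longrightarrow> i \<le> m - 1 \<Longrightarrow> lead (\<nu> (i + 1)) = new_elem (t (i - 1)) (\<nu> i)"
  shows "(\<forall>i\<le>m. is_vertex g0 (vecT (t i)))
       \<and> (\<forall>i\<le>m. \<forall>j\<le>m. i \<noteq> j \<longrightarrow> vecT (t i) \<noteq> vecT (t j) \<and> adjacent g0 (vecT (t i)) (vecT (t j)))"
proof -
  note app = assms(3) and step = assms(4) and ld = assms(5)
  have V0: "t 0 \<in> Tset g0 \<and> DCseg g0 (t 0) (t 0)" using vertex_DC[OF assms(2)] .
  have shifted: "t j \<in> Tset g0 \<and> DCseg g0 (t i) (t j) \<and> mass (t j) < mass (t i)"
    if ij: "i < j" "j \<le> m" and Vi: "t i \<in> Tset g0 \<and> DCseg g0 (t i) (t i)" for i j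
  proof -
    have "t (i + (j - i)) \<in> Tset g0 \<and> DCseg g0 (t (i + 0)) (t (i + (j - i))) \<and> mass (t (i + (j - i))) < mass (t (i + 0))
           \<and> t (i + 0) (new_elem (t (i + (j - i - 1))) (\<nu> (i + (j - i)))) = 0"
    proof (rule chain_main[of "\<lambda>k. t (i + k)" g0 "m - i" "\<lambda>k. \<nu> (i + k)" "j - i"])
      show "t (i + 0) \<in> Tset g0" "DCseg g0 (t (i + 0)) (t (i + 0))" using Vi by auto
      show "applicable (t (i + (k - 1))) (\<nu> (i + k))" if "1 \<le> k" "k \<le> m - i" for k
        using app[of "i + k"] that by (simp add: Nat.add_diff_assoc)
      show "t (i + k) = apply_mu (t (i + (k - 1))) (\<nu> (i + k))" if "1 \<le> k" "k \<le> m - i" for k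
        using step[of "i + k"] that by (simp add: Nat.add_diff_assoc)
      show "lead (\<nu> (i + (k + 1))) = new_elem (t (i + (k - 1))) (\<nu> (i + k))" if "1 \<le> k" "k \<le> m - i - 1" for k
        using ld[of "i + k"] that by (simp add: Nat.add_diff_assoc)
      show "1 \<le> j - i" "j - i \<le> m - i" using ij by auto
    qed
    then show ?thesis using ij by simp
  qed
  have Vall: "t i \<in> Tset g0 \<and> DCseg g0 (t i) (t i)" if "i \<le> m" for i
  proof (cases "i = 0")
    case True then show ?thesis using V0 by simp
  next
    case False
    then have "t i \<in> Tset g0 \<and> DCseg g0 (t 0) (t i) \<and> mass (t i) < mass (t 0)"
      using shifted[of 0 i] that V0 by simp
    moreover from this have "t 0 \<noteq> t i" by auto
    ultimately show ?thesis using DC_end[of g0 "t 0" "t i"] by blast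
  qed
  have vert: "\<forall>i\<le>m. is_vertex g0 (vecT (t i))" using Vall DC_vertex by blast
  have lt: "vecT (t i) \<noteq> vecT (t j) \<and> adjacent g0 (vecT (t i)) (vecT (t j))" if "i < j" "j \<le> m" for i j
  proof -
    have "t j \<in> Tset g0 \<and> DCseg g0 (t i) (t j) \<and> mass (t j) < mass (t i)"
      using shifted[of i j] that Vall[of i] by simp
    moreover have "t i \<in> Tset g0" using Vall[of i] that by simp
    ultimately have ne: "vecT (t i) \<noteq> vecT (t j)" and F: "closed_segment (vecT (t i)) (vecT (t j)) face_of corner g0"
      using DC_face[of "t i" g0 "t j"] by (auto simp: vecT_eq_iff)
    then show ?thesis using vert that by (simp add: adjacent_def)
  qed
  have "vecT (t i) \<noteq> vecT (t j) \<and> adjacent g0 (vecT (t i)) (vecT (t j))" if "i \<le> m" "j \<le> m" "i \<noteq> j" for i j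
  proof (cases "i < j")
    case True then show ?thesis using lt that by blast
  next
    case False
    then have "j < i" using that by simp
    then have "vecT (t j) \<noteq> vecT (t i) \<and> adjacent g0 (vecT (t j)) (vecT (t i))" using lt that by blast
    then show ?thesis by (auto simp: adjacent_def closed_segment_commute)
  qed
  then show ?thesis using vert by blast
qed

end
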